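(* For every integer $t\geq3$ and every $\varepsilon>0$ there exists $\varepsilon'>0$ such that no $n$-vertex $K_t$-free graph $G$ that is $d$-regular with $d\geq\left(\frac{3t-8}{3t-5}+\varepsilon\right)n$ contains $t+1$ vertices that are pairwise $\varepsilon'$-disjoint.
   Context: Let $\mathcal{K}$ be the set of cliques (vertex sets) of size $t-2$ in $G$. For $u,v\in V(G)$, let $\mathcal{F}_{uv}$ be the set of $K\in\mathcal{K}$ such that both $K\cup\{u\}$ and $K\cup\{v\}$ are cliques of size $t-1$ (in particular $u,v\notin K$). Two vertices $u,v$ are $\varepsilon'$-disjoint if $|\mathcal{F}_{uv}|\leq\varepsilon'|\mathcal{K}|$. *)

theory Defs
  imports Complex_Main
begin

text \<open>A finite simple graph on vertex set V (vertices are naturals; every finite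
graph is isomorphic to one of these) with symmetric irreflexive adjacency E.\<close>
definition simple_graph :: "nat set \<Rightarrow> (nat \<Rightarrow> nat \<Rightarrow> bool) \<Rightarrow> bool" where
  "simple_graph V E \<longleftrightarrow> finite V \<and> (\<forall>u v. E u v \<longrightarrow> u \<in> V \<and> v \<in> V)
     \<and> (\<forall>u v. E u v \<longrightarrow> E v u) \<and> (\<forall>u. \<not> E u u)"

definition is_clique :: "nat set \<Rightarrow> (nat \<Rightarrow> nat \<Rightarrow> bool) \<Rightarrow> nat set \<Rightarrow> bool" where
  "is_clique V E K \<longleftrightarrow> K \<subseteq> V \<and> (\<forall>u\<in>K. \<forall>v\<in>K. u \<noteq> v \<longrightarrow> E u v)"

definition cliques :: "nat set \<Rightarrow> (nat \<Rightarrow> nat \<Rightarrow> bool) \<Rightarrow> nat \<Rightarrow> nat set set" where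
  "cliques V E k = {K. is_clique V E K \<and> card K = k}"

definition Kt_free :: "nat set \<Rightarrow> (nat \<Rightarrow> nat \<Rightarrow> bool) \<Rightarrow> nat \<Rightarrow> bool" where
  "Kt_free V E t \<longleftrightarrow> cliques V E t = {}"

definition degree :: "nat set \<Rightarrow> (nat \<Rightarrow> nat \<Rightarrow> bool) \<Rightarrow> nat \<Rightarrow> nat" where
  "degree V E u = card {v \<in> V. E u v}"

definition regular :: "nat set \<Rightarrow> (nat \<Rightarrow> nat \<Rightarrow> bool) \<Rightarrow> nat \<Rightarrow> bool" where
  "regular V E d \<longleftrightarrow> (\<forall>u\<in>V. degree V E u = d)"

definition F_uv :: "nat set \<Rightarrow> (nat \<Rightarrow> nat \<Rightarrow> bool) \<Rightarrow> nat \<Rightarrow> nat \<Rightarrow> nat \<Rightarrow> nat set set" where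
  "F_uv V E t u v = {K \<in> cliques V E (t - 2).
      insert u K \<in> cliques V E (t - 1) \<and> insert v K \<in> cliques V E (t - 1)}"

definition eps_disjoint :: "nat set \<Rightarrow> (nat \<Rightarrow> nat \<Rightarrow> bool) \<Rightarrow> nat \<Rightarrow> real \<Rightarrow> nat \<Rightarrow> nat \<Rightarrow> bool" where
  "eps_disjoint V E t e u v \<longleftrightarrow>
     real (card (F_uv V E t u v)) \<le> e * real (card (cliques V E (t - 2)))"

end

theory Submission
  imports Defs
begin

definition nb :: "(nat \<Rightarrow> nat \<Rightarrow> bool) \<Rightarrow> nat \<Rightarrow> nat set" where
  "nb E u = {w. E u w}"

lemma sg_fin: "simple_graph V E \<Longrightarrow> finite V" by (simp add: simple_graph_def)
lemma sg_in1: "simple_graph V E \<Longrightarrow> E u v \<Longrightarrow> u \<in> V" by (simp add: simple_graph_def)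
lemma sg_in2: "simple_graph V E \<Longrightarrow> E u v \<Longrightarrow> v \<in> V" by (simp add: simple_graph_def)
lemma sg_sym: "simple_graph V E \<Longrightarrow> E u v \<Longrightarrow> E v u" by (simp add: simple_graph_def)
lemma sg_irr: "simple_graph V E \<Longrightarrow> \<not> E u u" by (simp add: simple_graph_def)

lemma nb_sub: "simple_graph V E \<Longrightarrow> nb E u \<subseteq> V"
  unfolding nb_def using sg_in2 by blast


lemma degree_nb: "simple_graph V E \<Longrightarrow> degree V E u = card (nb E u)"
proof -
  assume g: "simple_graph V E"
  have "{v \<in> V. E u v} = nb E u" unfolding nb_def using g by (auto simp: simple_graph_def)
  then show ?thesis unfolding degree_def by (rule arg_cong)
qed

lemma fin_nb: "simple_graph V E \<Longrightarrow> finite (nb E u)"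
  by (meson finite_subset nb_sub sg_fin)

lemma card_nonnb: "simple_graph V E \<Longrightarrow> card (V - nb E u) = card V - degree V E u"
  by (simp add: degree_nb nb_sub card_Diff_subset fin_nb)

lemma degree_le: "simple_graph V E \<Longrightarrow> u \<in> V \<Longrightarrow> degree V E u + 1 \<le> card V"
proof -
  assume g: "simple_graph V E" and u: "u \<in> V"
  have "nb E u \<subseteq> V - {u}" using nb_sub[OF g] sg_irr[OF g] by (auto simp: nb_def)
  then have "card (nb E u) \<le> card (V - {u})" by (meson card_mono finite_Diff g sg_fin)
  moreover have "card (V - {u}) = card V - 1" using u by simp
  moreover have "card V > 0" using u sg_fin[OF g] card_gt_0_iff by blast
  ultimately show ?thesis using degree_nb[OF g] by simp
qed

lemma cliques_fin: "simple_graph V E \<Longrightarrow> finite (cliques V E k)"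
proof -
  assume g: "simple_graph V E"
  have "cliques V E k \<subseteq> Pow V" by (auto simp: cliques_def is_clique_def)
  then show ?thesis using g sg_fin finite_Pow_iff finite_subset by metis
qed

lemma cliques_card_le: "simple_graph V E \<Longrightarrow> card (cliques V E k) \<le> card V ^ k"
proof -
  assume g: "simple_graph V E"
  have s: "cliques V E k \<subseteq> {B. B \<subseteq> V \<and> card B = k}" by (auto simp: cliques_def is_clique_def)
  have fV: "finite V" using g by (rule sg_fin)
  have "card (cliques V E k) \<le> card {B. B \<subseteq> V \<and> card B = k}"
    by (rule card_mono) (use fV s in auto)
  also have "\<dots> = card V choose k" using n_subsets fV by blast
  also have "\<dots> \<le> card V ^ k"
    by (cases "k \<le> card V") (auto simp: binomial_le_pow binomial_eq_0)
  finally show ?thesis .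
qed
lemma card_filter_sum:
  assumes "finite B"
  shows "card {b\<in>B. P b} = (\<Sum>b\<in>B. if P b then 1 else 0)"
proof -
  have "B \<inter> Collect P = {b\<in>B. P b}" by auto
  then show ?thesis using assms by (simp add: sum.If_cases)
qed

lemma card_filter_sum_real:
  assumes "finite B"
  shows "real (card {b\<in>B. P b}) = (\<Sum>b\<in>B. if P b then 1 else 0)"
proof -
  have "B \<inter> Collect P = {b\<in>B. P b}" by auto
  then show ?thesis using assms by (simp add: sum.If_cases)
qed

lemma cliques_card_le_real: "simple_graph V E \<Longrightarrow> real (card (cliques V E k)) \<le> real (card V) ^ k"
proof -
  assume g: "simple_graph V E"
  have "real (card (cliques V E k)) \<le> real (card V ^ k)" using cliques_card_le[OF g] by (simp only: of_nat_le_iff)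
  then show ?thesis by (simp only: of_nat_power)
qed

lemma sum_card_swap:
  assumes "finite A" "finite B"
  shows "(\<Sum>a\<in>A. card {b\<in>B. R a b}) = (\<Sum>b\<in>B. card {a\<in>A. R a b})"
proof -
  have "(\<Sum>a\<in>A. card {b\<in>B. R a b}) = (\<Sum>a\<in>A. \<Sum>b\<in>B. if R a b then 1 else 0)"
    by (rule sum.cong[OF refl card_filter_sum[OF assms(2)]])
  also have "\<dots> = (\<Sum>b\<in>B. \<Sum>a\<in>A. if R a b then 1 else 0)" by (rule sum.swap)
  also have "\<dots> = (\<Sum>b\<in>B. card {a\<in>A. R a b})"
    by (rule sum.cong[OF refl card_filter_sum[OF assms(1), symmetric]])
  finally show ?thesis .
qed

lemma pair_bound:
  assumes "finite S"
  shows "real (card {s\<in>S. P s}) \<le> 1 + (\<Sum>s\<in>S. \<Sum>s'\<in>S-{s}. if P s \<and> P s' then 1 else 0)"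
proof -
  define A where "A = {s\<in>S. P s}"
  define m where "m = card A"
  have fA: "finite A" using assms A_def by simp
  have "(\<Sum>s\<in>S. \<Sum>s'\<in>S-{s}. if P s \<and> P s' then 1 else 0::real)
        = (\<Sum>s\<in>S. if P s then real (card (A - {s})) else 0)"
  proof (rule sum.cong)
    fix s assume s: "s \<in> S"
    show "(\<Sum>s'\<in>S-{s}. if P s \<and> P s' then 1 else 0::real) = (if P s then real (card (A - {s})) else 0)"
    proof (cases "P s")
      case True
      have "(\<Sum>s'\<in>S-{s}. if P s \<and> P s' then 1 else 0::real) = (\<Sum>s'\<in>S-{s}. if P s' then 1 else 0)"
        using True by simp
      also have "\<dots> = real (card {s'\<in>S-{s}. P s'})" using assms card_filter_sum_real[of "S-{s}" P] by simp
      also have "{s'\<in>S-{s}. P s'} = A - {s}" by (auto simp: A_def)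
      finally show ?thesis using True by simp
    qed simp
  qed simp
  also have "\<dots> = (\<Sum>s\<in>A. real (card (A - {s})))"
  proof -
    have "S \<inter> Collect P = A" by (auto simp: A_def)
    then show ?thesis using assms by (simp add: sum.If_cases)
  qed
  also have "\<dots> = (\<Sum>s\<in>A. real m - 1)"
  proof (rule sum.cong[OF refl])
    fix x assume x: "x \<in> A"
    have "A \<noteq> {}" using x by blast
    then have "card A \<ge> 1" using fA by (simp add: Suc_le_eq card_gt_0_iff)
    then show "real (card (A - {x})) = real m - 1" using x fA by (simp add: m_def of_nat_diff)
  qed
  also have "\<dots> = real m * (real m - 1)" by (simp add: m_def)
  finally have e: "(\<Sum>s\<in>S. \<Sum>s'\<in>S-{s}. if P s \<and> P s' then 1 else 0::real) = real m * (real m - 1)" .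
  have "real m \<le> 1 + real m * (real m - 1)"
  proof -
    have "0 \<le> (real m - 1) * (real m - 1)" by simp
    then show ?thesis by (simp add: algebra_simps)
  qed
  then show ?thesis using e by (simp add: m_def A_def)
qed

definition Cl :: "nat set \<Rightarrow> (nat \<Rightarrow> nat \<Rightarrow> bool) \<Rightarrow> nat \<Rightarrow> nat set \<Rightarrow> nat set set" where
  "Cl V E j D = {K. is_clique V E K \<and> K \<subseteq> D \<and> card K = j}"

lemma Cl_fin: "simple_graph V E \<Longrightarrow> finite (Cl V E j D)"
proof -
  assume g: "simple_graph V E"
  have "Cl V E j D \<subseteq> Pow V" by (auto simp: Cl_def is_clique_def)
  then show ?thesis using g sg_fin finite_Pow_iff finite_subset by metis
qed

lemma clique_insert:
  assumes g: "simple_graph V E" and K: "is_clique V E K" and v: "v \<in> V" and adj: "K \<subseteq> nb E v"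
  shows "is_clique V E (insert v K)" "v \<notin> K"
proof -
  show "v \<notin> K" using adj sg_irr[OF g] by (auto simp: nb_def)
  show "is_clique V E (insert v K)"
    using K v adj unfolding is_clique_def nb_def
    by (auto simp: sg_sym[OF g])
qed

lemma card_sigma_id:
  assumes "finite A" "\<forall>K\<in>A. card K = j" "\<forall>K\<in>A. finite K"
  shows "card (SIGMA K:A. K) = j * card A"
  using assms by (simp add: card_SigmaI)

lemma clique_lb:
  assumes g: "simple_graph V E" and hb: "\<forall>u\<in>V. real (card (V - nb E u)) \<le> b" and b0: "b \<ge> 0"
  shows "C \<subseteq> V \<Longrightarrow> m \<ge> 0 \<Longrightarrow> real (card C) \<ge> real k * b + m \<Longrightarrow>
         real (card (Cl V E (Suc k) C)) \<ge> m ^ Suc k / fact (Suc k)"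
proof (induction k arbitrary: C)
  case 0
  have "Cl V E (Suc 0) C = (\<lambda>v. {v}) ` C"
  proof
    show "Cl V E (Suc 0) C \<subseteq> (\<lambda>v. {v}) ` C"
      by (auto simp: Cl_def card_Suc_eq)
    show "(\<lambda>v. {v}) ` C \<subseteq> Cl V E (Suc 0) C"
      using 0 by (auto simp: Cl_def is_clique_def)
  qed
  moreover have "card ((\<lambda>v. {v}) ` C) = card C" by (rule card_image) (simp add: inj_on_def)
  ultimately show ?case using 0 by simp
next
  case (Suc k)
  have fV: "finite V" using g by (rule sg_fin)
  have fC: "finite C" using Suc.prems(1) fV finite_subset by blast
  define P where "P = (SIGMA v:C. Cl V E (Suc k) (C \<inter> nb E v))"
  have lbv: "real (card (Cl V E (Suc k) (C \<inter> nb E v))) \<ge> m ^ Suc k / fact (Suc k)" if v: "v \<in> C" for v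
  proof (rule Suc.IH)
    show "C \<inter> nb E v \<subseteq> V" using Suc.prems(1) by blast
    show "m \<ge> 0" by (rule Suc.prems(2))
    have vV: "v \<in> V" using v Suc.prems(1) by blast
    have "C - nb E v \<subseteq> V - nb E v" using Suc.prems(1) by blast
    then have "card (C - nb E v) \<le> card (V - nb E v)" using fV by (simp add: card_mono)
    moreover have "card C = card (C \<inter> nb E v) + card (C - nb E v)"
      using fC by (metis Diff_Diff_Int Int_commute card_Diff_subset_Int card_Int_Diff inf.cobounded2 finite_Int)
    ultimately have "real (card C) \<le> real (card (C \<inter> nb E v)) + b"
      using hb vV by force
    then show "real k * b + m \<le> real (card (C \<inter> nb E v))"
      using Suc.prems(3) by (simp add: algebra_simps)
  qed
  have "real (card P) = (\<Sum>v\<in>C. real (card (Cl V E (Suc k) (C \<inter> nb E v))))"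
    unfolding P_def using fC Cl_fin[OF g] by (simp add: card_SigmaI)
  also have "\<dots> \<ge> (\<Sum>v\<in>C. m ^ Suc k / fact (Suc k))"
    by (rule sum_mono) (rule lbv)
  finally have P1: "real (card P) \<ge> real (card C) * (m ^ Suc k / fact (Suc k))" by simp
  have Cm: "real (card C) \<ge> m" using Suc.prems(3) b0 by (smt (verit) of_nat_0_le_iff mult_nonneg_nonneg)
  have P2: "real (card P) \<ge> m ^ Suc (Suc k) / fact (Suc k)"
  proof -
    have "m * (m ^ Suc k / fact (Suc k)) \<le> real (card C) * (m ^ Suc k / fact (Suc k))"
      by (rule mult_right_mono[OF Cm]) (use Suc.prems(2) in simp)
    then show ?thesis using P1 by simp
  qed
  define Q where "Q = (SIGMA K:Cl V E (Suc (Suc k)) C. K)"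
  have inj: "inj_on (\<lambda>(v, K). (insert v K, v)) P"
  proof (rule inj_onI)
    fix x y assume x: "x \<in> P" and y: "y \<in> P" and e: "(\<lambda>(v, K). (insert v K, v)) x = (\<lambda>(v, K). (insert v K, v)) y"
    obtain v K where xv: "x = (v, K)" by fastforce
    obtain w L where yw: "y = (w, L)" by fastforce
    have "v \<notin> K" using x xv sg_irr[OF g] by (auto simp: P_def Cl_def nb_def)
    moreover have "w \<notin> L" using y yw sg_irr[OF g] by (auto simp: P_def Cl_def nb_def)
    moreover have "insert v K = insert w L" "v = w" using e xv yw by auto
    ultimately show "x = y" using xv yw by (metis insert_ident)
  qed
  have img: "(\<lambda>(v, K). (insert v K, v)) ` P \<subseteq> Q"
  proof
    fix z assume "z \<in> (\<lambda>(v, K). (insert v K, v)) ` P"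
    then obtain v K where vK: "(v, K) \<in> P" and z: "z = (insert v K, v)" by auto
    have v: "v \<in> C" and K: "is_clique V E K" "K \<subseteq> C \<inter> nb E v" "card K = Suc k"
      using vK by (auto simp: P_def Cl_def)
    have vV: "v \<in> V" using v Suc.prems(1) by blast
    have ins: "is_clique V E (insert v K)" "v \<notin> K" using clique_insert[OF g K(1) vV] K(2) by auto
    have fK: "finite K" using K(3) card_ge_0_finite by (metis zero_less_Suc)
    have "card (insert v K) = Suc (Suc k)" using ins(2) fK K(3) by simp
    then have "insert v K \<in> Cl V E (Suc (Suc k)) C" using ins(1) K(2) v by (auto simp: Cl_def)
    then show "z \<in> Q" using z by (auto simp: Q_def)
  qed
  have fQ: "finite Q" unfolding Q_def using Cl_fin[OF g] fV
    by (intro finite_SigmaI) (auto simp: Cl_def is_clique_def intro: finite_subset)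
  have "card P \<le> card Q" using card_inj_on_le[OF inj img fQ] .
  also have "card Q = Suc (Suc k) * card (Cl V E (Suc (Suc k)) C)"
    unfolding Q_def
  proof (rule card_sigma_id)
    show "finite (Cl V E (Suc (Suc k)) C)" by (rule Cl_fin[OF g])
    show "\<forall>K\<in>Cl V E (Suc (Suc k)) C. card K = Suc (Suc k)" by (simp add: Cl_def)
    show "\<forall>K\<in>Cl V E (Suc (Suc k)) C. finite K" using fV by (auto simp: Cl_def is_clique_def intro: finite_subset)
  qed
  finally have "real (card P) \<le> real (Suc (Suc k)) * real (card (Cl V E (Suc (Suc k)) C))"
    by (metis of_nat_le_iff of_nat_mult)
  with P2 have "m ^ Suc (Suc k) / fact (Suc k) \<le> real (Suc (Suc k)) * real (card (Cl V E (Suc (Suc k)) C))"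
    by linarith
  then show ?case
    by (simp add: divide_simps) (simp add: ac_simps)
qed

lemma cliques_Cl: "cliques V E j = Cl V E j V"
  by (auto simp: cliques_def Cl_def is_clique_def)

definition subE :: "(nat \<Rightarrow> nat \<Rightarrow> bool) \<Rightarrow> nat \<Rightarrow> nat \<Rightarrow> nat \<Rightarrow> bool" where
  "subE E v = (\<lambda>a b. E a b \<and> a \<in> nb E v \<and> b \<in> nb E v)"

lemma sub_sg: "simple_graph V E \<Longrightarrow> simple_graph (nb E v) (subE E v)"
  unfolding simple_graph_def subE_def
  using fin_nb[of V E v] by (auto simp: simple_graph_def)

lemma sub_is_clique: "is_clique (nb E v) (subE E v) K \<longleftrightarrow> is_clique V E K \<and> K \<subseteq> nb E v"
  if "simple_graph V E" for V E v K
  using nb_sub[OF that, of v] unfolding is_clique_def subE_def by blast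

lemma sub_cliques: "simple_graph V E \<Longrightarrow> cliques (nb E v) (subE E v) j = Cl V E j (nb E v)"
  by (auto simp: cliques_def Cl_def sub_is_clique)

lemma sub_Kfree:
  assumes g: "simple_graph V E" and kf: "Kt_free V E (Suc j)" and v: "v \<in> V"
  shows "Kt_free (nb E v) (subE E v) j"
proof -
  have "cliques (nb E v) (subE E v) j = {}"
  proof (rule ccontr)
    assume "cliques (nb E v) (subE E v) j \<noteq> {}"
    then obtain K where "K \<in> Cl V E j (nb E v)" using sub_cliques[OF g] by blast
    then have K: "is_clique V E K" "K \<subseteq> nb E v" "card K = j" by (auto simp: Cl_def)
    have ins: "is_clique V E (insert v K)" "v \<notin> K" using clique_insert[OF g K(1) v K(2)] by auto
    have "finite K" using K(1) g sg_fin finite_subset by (metis is_clique_def)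
    then have "card (insert v K) = Suc j" using ins(2) K(3) by simp
    then have "insert v K \<in> cliques V E (Suc j)" using ins(1) by (simp add: cliques_def)
    then show False using kf by (simp add: Kt_free_def)
  qed
  then show ?thesis by (simp add: Kt_free_def)
qed

lemma sub_degree:
  assumes g: "simple_graph V E" and u: "u \<in> nb E v"
  shows "real (degree (nb E v) (subE E v) u) \<ge> real (degree V E u) - (real (card V) - real (card (nb E v)))"
proof -
  have fV: "finite V" using g by (rule sg_fin)
  have s1: "{w \<in> nb E v. subE E v u w} = nb E u \<inter> nb E v"
    using u by (auto simp: subE_def nb_def)
  have "nb E u \<subseteq> (nb E u \<inter> nb E v) \<union> (V - nb E v)" using nb_sub[OF g, of u] by blast
  then have "card (nb E u) \<le> card ((nb E u \<inter> nb E v) \<union> (V - nb E v))"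
    using fV fin_nb[OF g] by (intro card_mono) auto
  also have "\<dots> \<le> card (nb E u \<inter> nb E v) + card (V - nb E v)" by (rule card_Un_le)
  also have "card (V - nb E v) = card V - card (nb E v)"
    using nb_sub[OF g] fin_nb[OF g] by (simp add: card_Diff_subset)
  finally have "card (nb E u) \<le> card (nb E u \<inter> nb E v) + (card V - card (nb E v))" .
  moreover have "card (nb E v) \<le> card V" using nb_sub[OF g] fV by (simp add: card_mono)
  ultimately have "real (card (nb E u)) \<le> real (card (nb E u \<inter> nb E v)) + (real (card V) - real (card (nb E v)))"
    by (metis (no_types, opaque_lifting) of_nat_add of_nat_diff of_nat_le_iff)
  then show ?thesis unfolding degree_def[of "nb E v"] s1 degree_nb[OF g] by simp
qed

lemma F_sub_lift:
  assumes g: "simple_graph V E" and v: "v \<in> V"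
    and K: "K \<in> F_uv (nb E v) (subE E v) (j + 2) s s'"
  shows "insert v K \<in> F_uv V E (j + 3) s s'" "v \<notin> K"
proof -
  have fV: "finite V" using g by (rule sg_fin)
  have K1: "K \<in> Cl V E j (nb E v)" and K2: "insert s K \<in> Cl V E (j+1) (nb E v)"
    and K3: "insert s' K \<in> Cl V E (j+1) (nb E v)"
    using K sub_cliques[OF g] by (auto simp: F_uv_def)
  have Kc: "is_clique V E K" "K \<subseteq> nb E v" "card K = j" using K1 by (auto simp: Cl_def)
  have fK: "finite K" using Kc(1) fV finite_subset by (metis is_clique_def)
  have ins: "is_clique V E (insert v K)" "v \<notin> K" using clique_insert[OF g Kc(1) v Kc(2)] by auto
  show "v \<notin> K" by (rule ins(2))
  have cvK: "card (insert v K) = j + 1" using ins(2) fK Kc(3) by simp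
  have A: "insert v K \<in> cliques V E (j + 1)" using ins(1) cvK by (simp add: cliques_def)
  have lift: "insert x (insert v K) \<in> cliques V E (j + 2)" if x: "insert x K \<in> Cl V E (j+1) (nb E v)" for x
  proof -
    have xc: "is_clique V E (insert x K)" "insert x K \<subseteq> nb E v" "card (insert x K) = j + 1"
      using x by (auto simp: Cl_def)
    have xK: "x \<notin> K" using xc(3) Kc(3) fK by (metis card_insert_if n_not_Suc_n Suc_eq_plus1)
    have xv: "E v x" using xc(2) by (auto simp: nb_def)
    have xnv: "x \<noteq> v" using xv sg_irr[OF g] by blast
    have cl: "is_clique V E (insert x (insert v K))"
      using xc(1) ins(1) xv sg_sym[OF g xv] unfolding is_clique_def by (auto simp: xnv)
    have "card (insert x (insert v K)) = j + 2" using xK xnv cvK fK by simp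
    then show ?thesis using cl by (simp add: cliques_def)
  qed
  show "insert v K \<in> F_uv V E (j + 3) s s'"
    using A lift[OF K2] lift[OF K3] by (simp add: F_uv_def numeral_eq_Suc)
qed

lemma F_fin: "simple_graph V E \<Longrightarrow> finite (F_uv V E t s s')"
  unfolding F_uv_def using cliques_fin by auto

lemma F_card_elem: "simple_graph V E \<Longrightarrow> K \<in> F_uv V E t s s' \<Longrightarrow> card K = t - 2 \<and> finite K"
proof -
  assume g: "simple_graph V E" and K: "K \<in> F_uv V E t s s'"
  then show ?thesis using sg_fin[OF g] finite_subset
    by (auto simp: F_uv_def cliques_def is_clique_def)
qed

lemma F_double_count:
  assumes g: "simple_graph V E"
  shows "(\<Sum>v\<in>V. card (F_uv (nb E v) (subE E v) (j + 2) s s')) \<le> (j + 1) * card (F_uv V E (j + 3) s s')"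
proof -
  have fV: "finite V" using g by (rule sg_fin)
  define P where "P = (SIGMA v:V. F_uv (nb E v) (subE E v) (j + 2) s s')"
  define Q where "Q = (SIGMA K:F_uv V E (j + 3) s s'. K)"
  have cP: "card P = (\<Sum>v\<in>V. card (F_uv (nb E v) (subE E v) (j + 2) s s'))"
    unfolding P_def using fV F_fin[OF sub_sg[OF g]] by (simp add: card_SigmaI)
  have cQ: "card Q = (j + 1) * card (F_uv V E (j + 3) s s')"
    unfolding Q_def
    by (rule card_sigma_id) (use F_fin[OF g] F_card_elem[OF g] in auto)
  have fQ: "finite Q" unfolding Q_def using F_fin[OF g] F_card_elem[OF g] by auto
  have inj: "inj_on (\<lambda>(v, K). (insert v K, v)) P"
  proof (rule inj_onI)
    fix x y assume x: "x \<in> P" and y: "y \<in> P" and e: "(\<lambda>(v, K). (insert v K, v)) x = (\<lambda>(v, K). (insert v K, v)) y"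
    obtain v K where xv: "x = (v, K)" by fastforce
    obtain w L where yw: "y = (w, L)" by fastforce
    have "v \<notin> K" using x xv F_sub_lift(2)[OF g] by (auto simp: P_def)
    moreover have "w \<notin> L" using y yw F_sub_lift(2)[OF g] by (auto simp: P_def)
    moreover have "insert v K = insert w L" "v = w" using e xv yw by auto
    ultimately show "x = y" using xv yw by (metis insert_ident)
  qed
  have img: "(\<lambda>(v, K). (insert v K, v)) ` P \<subseteq> Q"
    using F_sub_lift(1)[OF g] by (auto simp: P_def Q_def)
  have "card P \<le> card Q" using card_inj_on_le[OF inj img fQ] .
  then show ?thesis using cP cQ by simp
qed

definition alpha :: "nat \<Rightarrow> real" where
  "alpha t = (3 * real t - 8) / (3 * real t - 5)"

definition Claim :: "nat \<Rightarrow> bool" where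
  "Claim t \<longleftrightarrow> (\<forall>\<epsilon>>0. \<exists>\<epsilon>'>0. \<forall>(V :: nat set) (E :: nat \<Rightarrow> nat \<Rightarrow> bool).
      simple_graph V E \<longrightarrow> Kt_free V E t \<longrightarrow>
      (\<forall>u\<in>V. real (degree V E u) \<ge> (alpha t + \<epsilon>) * real (card V)) \<longrightarrow>
      \<not> (\<exists>S \<subseteq> V. card S = t + 1 \<and> (\<forall>u\<in>S. \<forall>v\<in>S. u \<noteq> v \<longrightarrow> eps_disjoint V E t \<epsilon>' u v)))"

lemma sum_deg_swap:
  assumes g: "simple_graph V E" and S: "S \<subseteq> V"
  shows "(\<Sum>w\<in>V. real (card {s\<in>S. E w s})) = (\<Sum>s\<in>S. real (degree V E s))"
proof -
  have fV: "finite V" using g by (rule sg_fin)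
  have fS: "finite S" using S fV finite_subset by blast
  have "(\<Sum>w\<in>V. card {s\<in>S. E w s}) = (\<Sum>s\<in>S. card {w\<in>V. E w s})"
    by (rule sum_card_swap[OF fV fS])
  also have "\<dots> = (\<Sum>s\<in>S. degree V E s)"
  proof (rule sum.cong[OF refl])
    fix s assume "s \<in> S"
    have "{w\<in>V. E w s} = {w\<in>V. E s w}" using sg_sym[OF g] by blast
    then show "card {w\<in>V. E w s} = degree V E s" by (simp add: degree_def)
  qed
  finally show ?thesis by (metis of_nat_sum)
qed

lemma pairs_sum_le:
  fixes f :: "nat \<Rightarrow> nat \<Rightarrow> real"
  assumes fS: "finite S" and le: "\<And>s s'. s \<in> S \<Longrightarrow> s' \<in> S \<Longrightarrow> s \<noteq> s' \<Longrightarrow> f s s' \<le> c"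
  shows "(\<Sum>s\<in>S. \<Sum>s'\<in>S-{s}. f s s') \<le> real (card S) * (real (card S) - 1) * c"
proof -
  have "(\<Sum>s\<in>S. \<Sum>s'\<in>S-{s}. f s s') \<le> (\<Sum>s\<in>S. \<Sum>s'\<in>S-{s}. c)"
    by (intro sum_mono) (use le in auto)
  also have "\<dots> = (\<Sum>s\<in>S. (real (card S) - 1) * c)"
  proof (rule sum.cong[OF refl])
    fix s assume s: "s \<in> S"
    then have "card S \<ge> 1" using fS by (metis One_nat_def Suc_leI card_gt_0_iff empty_iff)
    then show "(\<Sum>s'\<in>S-{s}. c) = (real (card S) - 1) * c" using s fS by (simp add: of_nat_diff)
  qed
  also have "\<dots> = real (card S) * (real (card S) - 1) * c" by simp
  finally show ?thesis .
qed

lemma triple_swap: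
  fixes g :: "nat \<Rightarrow> nat \<Rightarrow> nat \<Rightarrow> real"
  shows "(\<Sum>w\<in>V. \<Sum>s\<in>S. \<Sum>s'\<in>S-{s}. g w s s') = (\<Sum>s\<in>S. \<Sum>s'\<in>S-{s}. \<Sum>w\<in>V. g w s s')"
proof -
  have "(\<Sum>w\<in>V. \<Sum>s\<in>S. \<Sum>s'\<in>S-{s}. g w s s') = (\<Sum>s\<in>S. \<Sum>w\<in>V. \<Sum>s'\<in>S-{s}. g w s s')"
    by (rule sum.swap)
  also have "\<dots> = (\<Sum>s\<in>S. \<Sum>s'\<in>S-{s}. \<Sum>w\<in>V. g w s s')"
    by (rule sum.cong[OF refl]) (rule sum.swap)
  finally show ?thesis .
qed

lemma base3: "Claim 3"
  unfolding Claim_def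
proof (intro allI impI)
  fix \<epsilon> :: real assume e: "\<epsilon> > 0"
  show "\<exists>\<epsilon>'>0. \<forall>V E. simple_graph V E \<longrightarrow> Kt_free V E 3 \<longrightarrow>
      (\<forall>u\<in>V. real (degree V E u) \<ge> (alpha 3 + \<epsilon>) * real (card V)) \<longrightarrow>
      \<not> (\<exists>S \<subseteq> V. card S = 3 + 1 \<and> (\<forall>u\<in>S. \<forall>v\<in>S. u \<noteq> v \<longrightarrow> eps_disjoint V E 3 \<epsilon>' u v))"
  proof (intro exI[of _ "\<epsilon>/4"] conjI allI impI notI)
    show "\<epsilon>/4 > 0" using e by simp
    fix V E assume g: "simple_graph V E" and kf: "Kt_free V E 3"
      and deg: "\<forall>u\<in>V. real (degree V E u) \<ge> (alpha 3 + \<epsilon>) * real (card V)"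
      and ex: "\<exists>S \<subseteq> V. card S = 3 + 1 \<and> (\<forall>u\<in>S. \<forall>v\<in>S. u \<noteq> v \<longrightarrow> eps_disjoint V E 3 (\<epsilon>/4) u v)"
    obtain S where S: "S \<subseteq> V" "card S = 4" and dis: "\<forall>u\<in>S. \<forall>v\<in>S. u \<noteq> v \<longrightarrow> eps_disjoint V E 3 (\<epsilon>/4) u v"
      using ex by auto
    have fV: "finite V" using g by (rule sg_fin)
    have fS: "finite S" using S(1) fV finite_subset by blast
    define n where "n = real (card V)"
    have "S \<noteq> {}" using S(2) by auto
    then have "V \<noteq> {}" using S(1) by blast
    then have npos: "n > 0" using fV by (simp add: n_def card_gt_0_iff)
    have a3: "alpha 3 = 1/4" by (simp add: alpha_def)
    have low: "(\<Sum>w\<in>V. real (card {s\<in>S. E w s})) \<ge> n + 4 * \<epsilon> * n"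
    proof -
      have "(\<Sum>s\<in>S. real (degree V E s)) \<ge> (\<Sum>s\<in>S. (1/4 + \<epsilon>) * n)"
        by (rule sum_mono) (use deg S(1) a3 in \<open>auto simp: n_def\<close>)
      also have "(\<Sum>s\<in>S. (1/4 + \<epsilon>) * n) = n + 4 * \<epsilon> * n" using S(2) by (simp add: algebra_simps)
      finally show ?thesis using sum_deg_swap[OF g S(1)] by simp
    qed
    have cnt: "(\<Sum>w\<in>V. if E w s \<and> E w s' then 1 else 0) \<le> \<epsilon> / 4 * n"
      if s: "s \<in> S" "s' \<in> S" "s \<noteq> s'" for s s'
    proof -
      have "(\<Sum>w\<in>V. if E w s \<and> E w s' then 1 else (0::real)) = real (card {w\<in>V. E w s \<and> E w s'})"
        using card_filter_sum_real[OF fV] by simp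
      also have "card {w\<in>V. E w s \<and> E w s'} \<le> card (F_uv V E 3 s s')"
      proof (rule card_inj_on_le[of "\<lambda>w. {w}"])
        show "inj_on (\<lambda>w. {w}) {w\<in>V. E w s \<and> E w s'}" by (simp add: inj_on_def)
        show "finite (F_uv V E 3 s s')" by (rule F_fin[OF g])
        show "(\<lambda>w. {w}) ` {w\<in>V. E w s \<and> E w s'} \<subseteq> F_uv V E 3 s s'"
        proof
          fix K assume "K \<in> (\<lambda>w. {w}) ` {w\<in>V. E w s \<and> E w s'}"
          then obtain w where w: "w \<in> V" "E w s" "E w s'" and K: "K = {w}" by auto
          have ws: "w \<noteq> s" "w \<noteq> s'" using w sg_irr[OF g] by auto
          have sV: "s \<in> V" "s' \<in> V" using s S(1) by auto
          have "{w} \<in> cliques V E 1" using w by (simp add: cliques_def is_clique_def)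
          moreover have "insert s {w} \<in> cliques V E 2" "insert s' {w} \<in> cliques V E 2"
            using w ws sV sg_sym[OF g] by (auto simp: cliques_def is_clique_def)
          ultimately show "K \<in> F_uv V E 3 s s'" using K by (simp add: F_uv_def)
        qed
      qed
      then have "real (card {w\<in>V. E w s \<and> E w s'}) \<le> real (card (F_uv V E 3 s s'))" by simp
      also have "\<dots> \<le> \<epsilon>/4 * real (card (cliques V E 1))"
        using dis s by (simp add: eps_disjoint_def)
      also have "\<dots> \<le> \<epsilon>/4 * n"
        using cliques_card_le[OF g, of 1] e by (simp add: n_def)
      finally show ?thesis .
    qed
    have up: "(\<Sum>w\<in>V. real (card {s\<in>S. E w s})) \<le> n + 3 * \<epsilon> * n"
    proof -
      have "(\<Sum>w\<in>V. real (card {s\<in>S. E w s})) \<le>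
            (\<Sum>w\<in>V. 1 + (\<Sum>s\<in>S. \<Sum>s'\<in>S-{s}. if E w s \<and> E w s' then 1 else 0))"
        by (rule sum_mono) (rule pair_bound[OF fS])
      also have "\<dots> = n + (\<Sum>w\<in>V. \<Sum>s\<in>S. \<Sum>s'\<in>S-{s}. if E w s \<and> E w s' then 1 else 0)"
        by (simp add: sum.distrib n_def)
      also have "(\<Sum>w\<in>V. \<Sum>s\<in>S. \<Sum>s'\<in>S-{s}. if E w s \<and> E w s' then 1 else (0::real))
           = (\<Sum>s\<in>S. \<Sum>s'\<in>S-{s}. \<Sum>w\<in>V. if E w s \<and> E w s' then 1 else 0)"
        by (rule triple_swap)
      also have "\<dots> \<le> real (card S) * (real (card S) - 1) * (\<epsilon>/4 * n)"
        by (rule pairs_sum_le[OF fS]) (rule cnt)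
      finally show ?thesis using S(2) by simp
    qed
    from low up have "\<epsilon> * n \<le> 0" by simp
    moreover have "\<epsilon> * n > 0" using e npos by simp
    ultimately show False by linarith
  qed
qed

lemma alpha_k4: "alpha (k + 4) = (3 * real k + 4) / (3 * real k + 7)"
  by (simp add: alpha_def algebra_simps)

lemma alpha_k3: "alpha (k + 3) = (3 * real k + 1) / (3 * real k + 4)"
  by (simp add: alpha_def algebra_simps)

lemma alpha_rel: "2 * alpha (k + 4) - 1 = alpha (k + 3) * alpha (k + 4)"
proof -
  have h1: "3 * real k + 4 \<noteq> 0" "3 * real k + 7 \<noteq> 0" by linarith+
  have "2 * alpha (k + 4) - 1 = (3 * real k + 1) / (3 * real k + 7)"
    unfolding alpha_k4 using h1 by (simp add: field_simps)
  moreover have "alpha (k + 3) * alpha (k + 4) = (3 * real k + 1) / (3 * real k + 7)"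
    unfolding alpha_k4 alpha_k3 using h1 by simp
  ultimately show ?thesis by simp
qed

lemma alpha_mono: "alpha (k + 3) \<le> alpha (k + 4)"
  unfolding alpha_k4 alpha_k3 by (simp add: field_simps)

lemma alpha_le1: "alpha (k + 3) \<le> 1"
  unfolding alpha_k3 by (simp add: field_simps)

lemma alpha_clique: "(real k + 1) * alpha (k + 4) - real k = 4 / (3 * real k + 7)"
  unfolding alpha_k4 by (simp add: field_simps)

lemma sub_deg_arith:
  fixes a a' x e n n' :: real
  assumes rel: "2 * a - 1 = a' * a" and aa: "a' \<le> a" and a1: "a' \<le> 1" and x: "x = a + e"
    and e: "e > 0" and x1: "x \<le> 1" and n: "n \<ge> 0" and n1: "x * n \<le> n'" and n2: "n' \<le> n"
  shows "x * n - n + n' \<ge> (a' + e / 2) * n'"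
proof -
  define c where "c = 1 - a' - e / 2"
  have f: "x * n - n + n' - (a' + e / 2) * n' = x * n - n + c * n'" by (simp add: c_def algebra_simps)
  have fa: "x * n - n + c * (x * n) \<ge> 0"
  proof -
    have "x * n - n + c * (x * n) = n * ((2 * x - 1) - a' * x - e * x / 2)" by (simp add: c_def algebra_simps)
    also have "(2 * x - 1) - a' * x = e * (2 - a')" using rel x by (simp add: algebra_simps)
    finally have eq: "x * n - n + c * (x * n) = n * (e * (2 - a') - e * x / 2)" by simp
    have "e * (2 - a') - e * x / 2 \<ge> 0"
    proof -
      have "e * x \<le> e * 1" using x1 e by (intro mult_left_mono) auto
      moreover have "e * 1 \<le> e * (2 - a')" using a1 e by (intro mult_left_mono) auto
      ultimately show ?thesis using e by linarith
    qed
    then show ?thesis using eq n by simp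
  qed
  have fb: "x * n - n + c * n \<ge> 0"
  proof -
    have "x * n - n + c * n = n * (a + e - a' - e / 2)" using x by (simp add: c_def algebra_simps)
    moreover have "a + e - a' - e / 2 \<ge> 0" using aa e by simp
    ultimately show ?thesis using n by simp
  qed
  have "x * n - n + c * n' \<ge> 0"
  proof (cases "c \<ge> 0")
    case True
    then have "c * (x * n) \<le> c * n'" using n1 by (simp add: mult_left_mono)
    then show ?thesis using fa by linarith
  next
    case False
    then have "c * n \<le> c * n'" using n2 by (simp add: mult_left_mono_neg)
    then show ?thesis using fb by linarith
  qed
  then show ?thesis using f by linarith
qed

lemma clique_subset: "is_clique V E Q \<Longrightarrow> K \<subseteq> Q \<Longrightarrow> is_clique V E K"
  unfolding is_clique_def by blast

lemma triangle_bad: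
  assumes g: "simple_graph V E" and kf: "Kt_free V E 4" and S: "S \<subseteq> V" and cS: "card S = 5"
    and Q: "Q \<in> Cl V E 3 B" and B: "\<forall>q\<in>B. card {s\<in>S. E q s} = 3"
  shows "\<exists>s\<in>S. \<exists>s'\<in>S-{s}. \<exists>K\<in>F_uv V E 4 s s'. \<exists>w\<in>V. Q = insert w K"
proof -
  have fV: "finite V" using g by (rule sg_fin)
  have fS: "finite S" using S fV finite_subset by blast
  have Qc: "is_clique V E Q" "Q \<subseteq> B" "card Q = 3" using Q by (auto simp: Cl_def)
  have fQ: "finite Q" using Qc(3) card_ge_0_finite by force
  have QV: "Q \<subseteq> V" using Qc(1) by (simp add: is_clique_def)
  have h1: "(\<Sum>s\<in>S. card {q\<in>Q. E s q}) = 9"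
  proof -
    have "(\<Sum>s\<in>S. card {q\<in>Q. E s q}) = (\<Sum>q\<in>Q. card {s\<in>S. E s q})"
      by (rule sum_card_swap[OF fS fQ])
    also have "\<dots> = (\<Sum>q\<in>Q. 3)"
    proof (rule sum.cong[OF refl])
      fix q assume q: "q \<in> Q"
      have "{s\<in>S. E s q} = {s\<in>S. E q s}" using sg_sym[OF g] by blast
      then show "card {s\<in>S. E s q} = 3" using B q Qc(2) by auto
    qed
    finally show ?thesis using Qc(3) by simp
  qed
  have h2: "card {q\<in>Q. E s q} \<le> 2" if s: "s \<in> S" for s
  proof (rule ccontr)
    assume "\<not> card {q\<in>Q. E s q} \<le> 2"
    then have c3: "card {q\<in>Q. E s q} = card Q"
      using Qc(3) card_mono[OF fQ, of "{q\<in>Q. E s q}"] by auto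
    have "{q\<in>Q. E s q} = Q" by (rule card_subset_eq[OF fQ _ c3]) auto
    then have Qn: "Q \<subseteq> nb E s" by (auto simp: nb_def)
    have sV: "s \<in> V" using s S by blast
    have ins: "is_clique V E (insert s Q)" "s \<notin> Q" using clique_insert[OF g Qc(1) sV Qn] by auto
    have "card (insert s Q) = 4" using ins(2) fQ Qc(3) by simp
    then have "insert s Q \<in> cliques V E 4" using ins(1) by (simp add: cliques_def)
    then show False using kf by (simp add: Kt_free_def)
  qed
  define Fu where "Fu = {s\<in>S. card {q\<in>Q. E s q} = 2}"
  have h3: "(\<Sum>s\<in>S. card {q\<in>Q. E s q}) \<le> (\<Sum>s\<in>S. 1 + (if s \<in> Fu then 1 else 0))"
  proof (rule sum_mono)
    fix s assume s: "s \<in> S"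
    show "card {q\<in>Q. E s q} \<le> 1 + (if s \<in> Fu then 1 else 0)"
      using h2[OF s] s by (auto simp: Fu_def)
  qed
  have "(\<Sum>s\<in>S. 1 + (if s \<in> Fu then 1 else 0::nat)) = card S + card Fu"
  proof -
    have "(\<Sum>s\<in>S. (if s \<in> Fu then 1 else 0::nat)) = card Fu"
      using card_filter_sum[OF fS, of "\<lambda>s. s \<in> Fu"] by (simp add: Fu_def)
    moreover have "(\<Sum>s\<in>S. 1 + (if s \<in> Fu then 1 else 0::nat)) = (\<Sum>s\<in>S. 1) + (\<Sum>s\<in>S. (if s \<in> Fu then 1 else 0::nat))"
      by (rule sum.distrib)
    ultimately show ?thesis by simp
  qed
  then have cFu: "card Fu \<ge> 4" using h1 h3 cS by simp
  define f where "f s = {q\<in>Q. E s q}" for s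
  have img: "f ` Fu \<subseteq> {K. K \<subseteq> Q \<and> card K = 2}" by (auto simp: f_def Fu_def)
  have c2: "card {K. K \<subseteq> Q \<and> card K = 2} = 3" using n_subsets[OF fQ, of 2] Qc(3) by (simp add: choose_two)
  have "\<not> inj_on f Fu"
  proof
    assume "inj_on f Fu"
    then have "card Fu \<le> card {K. K \<subseteq> Q \<and> card K = 2}"
      using img by (intro card_inj_on_le) (auto simp: fQ)
    then show False using c2 cFu by simp
  qed
  then obtain s s' where ss: "s \<in> Fu" "s' \<in> Fu" "s \<noteq> s'" "f s = f s'"
    unfolding inj_on_def by blast
  define K where "K = f s"
  have KQ: "K \<subseteq> Q" and cK: "card K = 2" using ss(1) by (auto simp: K_def f_def Fu_def)
  have fK: "finite K" using KQ fQ finite_subset by blast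
  have Kcl: "is_clique V E K" using clique_subset[OF Qc(1) KQ] .
  have good: "insert x K \<in> cliques V E 3" if x: "x \<in> S" "f x = K" for x
  proof -
    have xn: "K \<subseteq> nb E x" using x(2) by (auto simp: f_def nb_def)
    have xV: "x \<in> V" using x(1) S by blast
    have ins: "is_clique V E (insert x K)" "x \<notin> K" using clique_insert[OF g Kcl xV xn] by auto
    have "card (insert x K) = 3" using ins(2) fK cK by simp
    then show ?thesis using ins(1) by (simp add: cliques_def)
  qed
  have KF: "K \<in> F_uv V E 4 s s'"
    using good[of s] good[of s'] ss Kcl cK by (auto simp: F_uv_def cliques_def K_def Fu_def)
  have "Q - K \<noteq> {}" using KQ cK Qc(3) by (metis Diff_eq_empty_iff subset_antisym numeral_eq_iff semiring_norm(89))
  then obtain w where w: "w \<in> Q" "w \<notin> K" by blast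
  have "insert w K = Q"
  proof (rule card_subset_eq[OF fQ])
    show "insert w K \<subseteq> Q" using w KQ by blast
    show "card (insert w K) = card Q" using w fK cK Qc(3) by simp
  qed
  moreover have "w \<in> V" using w QV by blast
  moreover have "s \<in> S" "s' \<in> S - {s}" using ss by (auto simp: Fu_def)
  ultimately show ?thesis using KF by blast
qed

lemma a_le_S: "finite S \<Longrightarrow> card {s\<in>S. E w s} \<le> card S"
  by (rule card_mono) auto

lemma T_large_k1:
  assumes g: "simple_graph V E" and S: "S \<subseteq> V" and cS: "card S = k + 5" and k: "k \<ge> 1"
    and e: "\<epsilon> > 0"
    and deg: "\<forall>u\<in>V. real (degree V E u) \<ge> (alpha (k + 4) + \<epsilon>) * real (card V)"
  shows "real (card {w\<in>V. k + 4 \<le> card {s\<in>S. E w s}}) \<ge> \<epsilon> * real (card V)"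
proof -
  have fV: "finite V" using g by (rule sg_fin)
  have fS: "finite S" using S fV finite_subset by blast
  define n where "n = real (card V)"
  define T where "T = {w\<in>V. k + 4 \<le> card {s\<in>S. E w s}}"
  define a where "a = alpha (k + 4)"
  have low: "(\<Sum>w\<in>V. real (card {s\<in>S. E w s})) \<ge> real (k + 5) * ((a + \<epsilon>) * n)"
  proof -
    have "(\<Sum>s\<in>S. real (degree V E s)) \<ge> (\<Sum>s\<in>S. (a + \<epsilon>) * n)"
      by (rule sum_mono) (use deg S in \<open>auto simp: n_def a_def\<close>)
    then show ?thesis using sum_deg_swap[OF g S] cS by simp
  qed
  have up: "(\<Sum>w\<in>V. real (card {s\<in>S. E w s})) \<le> (\<Sum>w\<in>V. (real k + 3) + 2 * (if k + 4 \<le> card {s\<in>S. E w s} then 1 else 0))"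
  proof (rule sum_mono)
    fix w assume "w \<in> V"
    have "card {s\<in>S. E w s} \<le> k + 5" using a_le_S[OF fS] cS by metis
    then show "real (card {s\<in>S. E w s}) \<le> (real k + 3) + 2 * (if k + 4 \<le> card {s\<in>S. E w s} then 1 else 0)"
      by auto
  qed
  also have "\<dots> = (real k + 3) * n + 2 * real (card T)"
    using card_filter_sum_real[OF fV, of "\<lambda>w. k + 4 \<le> card {s\<in>S. E w s}"]
    by (simp add: sum.distrib sum_distrib_left n_def T_def)
  finally have ineq: "real (k + 5) * ((a + \<epsilon>) * n) \<le> (real k + 3) * n + 2 * real (card T)"
    using low by linarith
  have ak: "(real k + 5) * a \<ge> real k + 3"
  proof -
    have "(real k + 5) * a = (real k + 5) * (3 * real k + 4) / (3 * real k + 7)"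
      by (simp add: a_def alpha_k4)
    moreover have "(real k + 3) * (3 * real k + 7) \<le> (real k + 5) * (3 * real k + 4)"
      using k by (simp add: algebra_simps)
    moreover have "(3 * real k + 7) > 0" by simp
    ultimately show ?thesis by (simp add: pos_le_divide_eq)
  qed
  have n0: "n \<ge> 0" by (simp add: n_def)
  have "(real k + 3) * n \<le> (real k + 5) * a * n" using ak n0 by (simp add: mult_right_mono)
  moreover have "2 * \<epsilon> * n \<le> (real k + 5) * \<epsilon> * n" using e n0 by (simp add: mult_right_mono)
  moreover have "real (k + 5) * ((a + \<epsilon>) * n) = (real k + 5) * a * n + (real k + 5) * \<epsilon> * n"
    by (simp add: algebra_simps)
  ultimately have "2 * \<epsilon> * n \<le> 2 * real (card T)" using ineq by linarith
  then show ?thesis by (simp add: T_def n_def)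
qed

lemma n_pos: "simple_graph V E \<Longrightarrow> u \<in> V \<Longrightarrow> real (card V) > 0"
  using sg_fin card_gt_0_iff by fastforce

lemma hb_lemma:
  assumes g: "simple_graph V E" and deg: "\<forall>u\<in>V. real (degree V E u) \<ge> x * real (card V)"
  shows "\<forall>u\<in>V. real (card (V - nb E u)) \<le> real (card V) - x * real (card V)"
proof
  fix u assume u: "u \<in> V"
  have "degree V E u \<le> card V" using degree_le[OF g u] by simp
  then have "real (card (V - nb E u)) = real (card V) - real (degree V E u)"
    using card_nonnb[OF g, of u] by (simp add: of_nat_diff)
  then show "real (card (V - nb E u)) \<le> real (card V) - x * real (card V)" using deg u by simp
qed

lemma x_lt1:
  assumes g: "simple_graph V E" and u: "u \<in> V" and deg: "\<forall>u\<in>V. real (degree V E u) \<ge> x * real (card V)"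
  shows "x < 1"
proof -
  have "real (degree V E u) + 1 \<le> real (card V)" using degree_le[OF g u] by linarith
  moreover have "x * real (card V) \<le> real (degree V E u)" using deg u by blast
  ultimately have lt: "x * real (card V) < real (card V)" by linarith
  show ?thesis
  proof (rule ccontr)
    assume "\<not> x < 1"
    then have "1 * real (card V) \<le> x * real (card V)" using n_pos[OF g u] by (intro mult_right_mono) auto
    then show False using lt by simp
  qed
qed

lemma T_large_k0:
  assumes g: "simple_graph V E" and kf: "Kt_free V E 4" and S: "S \<subseteq> V" and cS: "card S = 5"
    and e: "\<epsilon> > 0"
    and deg: "\<forall>u\<in>V. real (degree V E u) \<ge> (alpha 4 + \<epsilon>) * real (card V)"
    and dis: "\<forall>s\<in>S. \<forall>s'\<in>S. s \<noteq> s' \<longrightarrow> real (card (F_uv V E 4 s s')) \<le> e' * real (card (cliques V E 2))"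
    and e'1: "e' \<le> \<epsilon> ^ 3 / 4" and e'0: "e' \<ge> 0"
  shows "real (card {w\<in>V. 4 \<le> card {s\<in>S. E w s}}) \<ge> \<epsilon> * real (card V)"
proof (rule ccontr)
  assume neg: "\<not> ?thesis"
  have fV: "finite V" using g by (rule sg_fin)
  have fS: "finite S" using S fV finite_subset by blast
  define n where "n = real (card V)"
  define T where "T = {w\<in>V. 4 \<le> card {s\<in>S. E w s}}"
  define B where "B = {w\<in>V. card {s\<in>S. E w s} = 3}"
  have a4: "alpha 4 = 4/7" by (simp add: alpha_def)
  have "S \<noteq> {}" using cS by auto
  then obtain u0 where u0: "u0 \<in> V" using S by blast
  have npos: "n > 0" using n_pos[OF g u0] by (simp add: n_def)
  have Tl: "real (card T) < \<epsilon> * n" using neg by (simp add: T_def n_def)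
  have low: "(\<Sum>w\<in>V. real (card {s\<in>S. E w s})) \<ge> 5 * ((4/7 + \<epsilon>) * n)"
  proof -
    have "(\<Sum>s\<in>S. real (degree V E s)) \<ge> (\<Sum>s\<in>S. (4/7 + \<epsilon>) * n)"
      by (rule sum_mono) (use deg S a4 in \<open>auto simp: n_def\<close>)
    then show ?thesis using sum_deg_swap[OF g S] cS by simp
  qed
  have up: "(\<Sum>w\<in>V. real (card {s\<in>S. E w s})) \<le>
     (\<Sum>w\<in>V. 2 + (if card {s\<in>S. E w s} = 3 then 1 else 0) + 3 * (if 4 \<le> card {s\<in>S. E w s} then 1 else 0))"
  proof (rule sum_mono)
    fix w assume "w \<in> V"
    have "card {s\<in>S. E w s} \<le> 5" using a_le_S[OF fS] cS by metis
    then show "real (card {s\<in>S. E w s}) \<le> 2 + (if card {s\<in>S. E w s} = 3 then 1 else 0) + 3 * (if 4 \<le> card {s\<in>S. E w s} then 1 else 0)"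
      by auto
  qed
  also have "\<dots> = 2 * n + real (card B) + 3 * real (card T)"
    using card_filter_sum_real[OF fV, of "\<lambda>w. card {s\<in>S. E w s} = 3"]
      card_filter_sum_real[OF fV, of "\<lambda>w. 4 \<le> card {s\<in>S. E w s}"]
    by (simp add: sum.distrib sum_distrib_left n_def T_def B_def)
  finally have "5 * ((4/7 + \<epsilon>) * n) \<le> 2 * n + real (card B) + 3 * real (card T)" using low by linarith
  then have Bl: "real (card B) \<ge> (6/7 + 2 * \<epsilon>) * n" using Tl by (simp add: algebra_simps)
  define b where "b = n - (4/7 + \<epsilon>) * n"
  have hb: "\<forall>u\<in>V. real (card (V - nb E u)) \<le> b"
    using hb_lemma[OF g deg] by (simp add: b_def n_def a4)
  have x1: "4/7 + \<epsilon> < 1" using x_lt1[OF g u0 deg] a4 by simp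
  have b0: "b \<ge> 0" using x1 npos by (simp add: b_def algebra_simps mult_le_cancel_right1)
  have BV: "B \<subseteq> V" by (auto simp: B_def)
  have m0: "4 * \<epsilon> * n \<ge> 0" using e npos by simp
  have "real (card B) \<ge> real 2 * b + 4 * \<epsilon> * n" using Bl by (simp add: b_def algebra_simps)
  from clique_lb[OF g hb b0 BV m0 this]
  have Cl3: "real (card (Cl V E 3 B)) \<ge> (4 * \<epsilon> * n) ^ 3 / 6"
    by (simp add: numeral_3_eq_3 fact_numeral)
  have cover: "Cl V E 3 B \<subseteq> (\<Union>s\<in>S. \<Union>s'\<in>S-{s}. \<Union>K\<in>F_uv V E 4 s s'. (\<lambda>w. insert w K) ` V)"
  proof
    fix Q assume Q: "Q \<in> Cl V E 3 B"
    have "\<forall>q\<in>B. card {s\<in>S. E q s} = 3" by (simp add: B_def)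
    from triangle_bad[OF g kf S cS Q this]
    show "Q \<in> (\<Union>s\<in>S. \<Union>s'\<in>S-{s}. \<Union>K\<in>F_uv V E 4 s s'. (\<lambda>w. insert w K) ` V)" by blast
  qed
  have "card (Cl V E 3 B) \<le> card (\<Union>s\<in>S. \<Union>s'\<in>S-{s}. \<Union>K\<in>F_uv V E 4 s s'. (\<lambda>w. insert w K) ` V)"
    by (rule card_mono[OF _ cover]) (use fS fV F_fin[OF g] in auto)
  also have "\<dots> \<le> (\<Sum>s\<in>S. card (\<Union>s'\<in>S-{s}. \<Union>K\<in>F_uv V E 4 s s'. (\<lambda>w. insert w K) ` V))"
    by (rule card_UN_le[OF fS])
  also have "\<dots> \<le> (\<Sum>s\<in>S. \<Sum>s'\<in>S-{s}. card (\<Union>K\<in>F_uv V E 4 s s'. (\<lambda>w. insert w K) ` V))"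
    by (rule sum_mono, rule card_UN_le) (use fS in auto)
  also have "\<dots> \<le> (\<Sum>s\<in>S. \<Sum>s'\<in>S-{s}. card (F_uv V E 4 s s') * card V)"
  proof (rule sum_mono, rule sum_mono)
    fix s s'
    have "card (\<Union>K\<in>F_uv V E 4 s s'. (\<lambda>w. insert w K) ` V) \<le> (\<Sum>K\<in>F_uv V E 4 s s'. card ((\<lambda>w. insert w K) ` V))"
      by (rule card_UN_le[OF F_fin[OF g]])
    also have "\<dots> \<le> (\<Sum>K\<in>F_uv V E 4 s s'. card V)"
      by (rule sum_mono) (rule card_image_le[OF fV])
    finally show "card (\<Union>K\<in>F_uv V E 4 s s'. (\<lambda>w. insert w K) ` V) \<le> card (F_uv V E 4 s s') * card V" by simp
  qed
  finally have c1: "real (card (Cl V E 3 B)) \<le> (\<Sum>s\<in>S. \<Sum>s'\<in>S-{s}. real (card (F_uv V E 4 s s')) * n)"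
    by (simp add: n_def) (metis (no_types, lifting) of_nat_le_iff of_nat_mult of_nat_sum sum.cong)
  have c2: "(\<Sum>s\<in>S. \<Sum>s'\<in>S-{s}. real (card (F_uv V E 4 s s')) * n) \<le> real (card S) * (real (card S) - 1) * (e' * n ^ 2 * n)"
  proof (rule pairs_sum_le[OF fS])
    fix s s' assume ss: "s \<in> S" "s' \<in> S" "s \<noteq> s'"
    have "real (card (F_uv V E 4 s s')) \<le> e' * real (card (cliques V E 2))" using dis ss by blast
    also have "\<dots> \<le> e' * n ^ 2" using cliques_card_le[OF g, of 2] e'0
      by (intro mult_left_mono) (simp_all add: n_def of_nat_power[symmetric] del: of_nat_power)
    finally show "real (card (F_uv V E 4 s s')) * n \<le> e' * n ^ 2 * n"
      using npos by (simp add: mult_right_mono)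
  qed
  have "(4 * \<epsilon> * n) ^ 3 / 6 \<le> 20 * (e' * n ^ 2 * n)" using Cl3 c1 c2 cS by simp
  also have "\<dots> \<le> 20 * (\<epsilon> ^ 3 / 4 * n ^ 2 * n)" using e'1 npos by (simp add: mult_right_mono)
  finally have ch: "(4 * \<epsilon> * n) ^ 3 / 6 \<le> 20 * (\<epsilon> ^ 3 / 4 * n ^ 2 * n)" .
  define P where "P = (\<epsilon> * n) ^ 3"
  have eq1: "(4 * \<epsilon> * n) ^ 3 / 6 = 64 / 6 * P" by (simp add: P_def power_mult_distrib)
  have eq2: "20 * (\<epsilon> ^ 3 / 4 * n ^ 2 * n) = 5 * P" by (simp add: P_def power_mult_distrib power2_eq_square power3_eq_cube)
  have "P > 0" using e npos by (simp add: P_def)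
  then show False using ch eq1 eq2 by linarith
qed

lemma stepB:
  fixes k :: nat and V :: "nat set" and E :: "nat \<Rightarrow> nat \<Rightarrow> bool"
  assumes g: "simple_graph V E" and kf: "Kt_free V E (k + 4)" and S: "S \<subseteq> V" and cS: "card S = k + 5"
    and e: "\<epsilon> > 0"
    and deg: "\<forall>u\<in>V. real (degree V E u) \<ge> (alpha (k + 4) + \<epsilon>) * real (card V)"
    and Tl: "real (card {w\<in>V. k + 4 \<le> card {s\<in>S. E w s}}) \<ge> \<epsilon> * real (card V)"
    and IH: "\<forall>(V' :: nat set) (E' :: nat \<Rightarrow> nat \<Rightarrow> bool). simple_graph V' E' \<longrightarrow> Kt_free V' E' (k + 3) \<longrightarrow>
      (\<forall>u\<in>V'. real (degree V' E' u) \<ge> (alpha (k + 3) + \<epsilon> / 2) * real (card V')) \<longrightarrow>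
      \<not> (\<exists>S' \<subseteq> V'. card S' = k + 3 + 1 \<and> (\<forall>u\<in>S'. \<forall>v\<in>S'. u \<noteq> v \<longrightarrow> eps_disjoint V' E' (k + 3) e'' u v))"
    and dis: "\<forall>s\<in>S. \<forall>s'\<in>S. s \<noteq> s' \<longrightarrow> eps_disjoint V E (k + 4) e' s s'"
    and e'0: "e' \<ge> 0" and e''0: "e'' > 0"
    and small: "e' * (real (k + 5) * real (k + 4) * real (k + 2)) < e'' * \<epsilon> * ((4 / (3 * real k + 7)) ^ (k + 1) / fact (k + 1))"
  shows False
proof -
  have fV: "finite V" using g by (rule sg_fin)
  have fS: "finite S" using S fV finite_subset by blast
  define n where "n = real (card V)"
  define T where "T = {w\<in>V. k + 4 \<le> card {s\<in>S. E w s}}"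
  define x where "x = alpha (k + 4) + \<epsilon>"
  define c where "c = (4 / (3 * real k + 7)) ^ (k + 1) / fact (k + 1)"
  define Fs where "Fs v = (\<Sum>s\<in>S. \<Sum>s'\<in>S-{s}. real (card (F_uv (nb E v) (subE E v) (k + 3) s s')))" for v
  have "S \<noteq> {}" using cS by auto
  then obtain u0 where u0: "u0 \<in> V" using S by blast
  have npos: "n > 0" using n_pos[OF g u0] by (simp add: n_def)
  have degx: "\<forall>u\<in>V. real (degree V E u) \<ge> x * real (card V)" using deg by (simp add: x_def)
  have x1: "x < 1" using x_lt1[OF g u0 degx] .
  have cpos: "c > 0" by (simp add: c_def)
  have TV: "T \<subseteq> V" by (auto simp: T_def)
  have fT: "finite T" using TV fV finite_subset by blast
  have Tn: "real (card T) \<ge> \<epsilon> * n" using Tl by (simp add: T_def n_def)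
  have Tne: "T \<noteq> {}"
  proof
    assume "T = {}"
    moreover have "\<epsilon> * n > 0" using e npos by simp
    ultimately show False using Tn by simp
  qed
  have e32: "k + 3 - 2 = k + 1" "k + 4 - 2 = k + 2" by simp_all
  \<comment> \<open>Claim 1: in each neighbourhood of T some pair is not disjoint\<close>
  have claim1: "e'' * real (card (Cl V E (k + 1) (nb E v))) < Fs v" if v: "v \<in> T" for v
  proof -
    have vV: "v \<in> V" using v TV by blast
    define n' where "n' = real (card (nb E v))"
    have "x * real (card V) \<le> real (degree V E v)" using degx vV by blast
    then have n'1: "x * n \<le> n'" using degree_nb[OF g, of v] by (simp add: n'_def n_def)
    have n'2: "n' \<le> n" using nb_sub[OF g, of v] fV by (simp add: n'_def n_def card_mono)
    have sg': "simple_graph (nb E v) (subE E v)" by (rule sub_sg[OF g])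
    have kf': "Kt_free (nb E v) (subE E v) (k + 3)" using sub_Kfree[OF g _ vV, of "k+3"] kf by (simp add: add.commute)
    have deg': "\<forall>u\<in>nb E v. real (degree (nb E v) (subE E v) u) \<ge> (alpha (k + 3) + \<epsilon> / 2) * real (card (nb E v))"
    proof
      fix u assume u: "u \<in> nb E v"
      have uV: "u \<in> V" using u nb_sub[OF g] by blast
      have "real (degree (nb E v) (subE E v) u) \<ge> real (degree V E u) - (n - n')"
        using sub_degree[OF g u] by (simp add: n_def n'_def)
      moreover have "real (degree V E u) \<ge> x * n" using degx uV by (simp add: n_def)
      moreover have "x * n - n + n' \<ge> (alpha (k + 3) + \<epsilon> / 2) * n'"
        by (rule sub_deg_arith[OF alpha_rel alpha_mono alpha_le1 x_def e _ _ n'1 n'2]) (use x1 npos in auto)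
      ultimately show "real (degree (nb E v) (subE E v) u) \<ge> (alpha (k + 3) + \<epsilon> / 2) * real (card (nb E v))"
        by (simp add: n'_def)
    qed
    have IHv: "simple_graph (nb E v) (subE E v) \<longrightarrow> Kt_free (nb E v) (subE E v) (k + 3) \<longrightarrow>
      (\<forall>u\<in>nb E v. real (degree (nb E v) (subE E v) u) \<ge> (alpha (k + 3) + \<epsilon> / 2) * real (card (nb E v))) \<longrightarrow>
      \<not> (\<exists>S' \<subseteq> nb E v. card S' = k + 3 + 1 \<and> (\<forall>u\<in>S'. \<forall>w\<in>S'. u \<noteq> w \<longrightarrow> eps_disjoint (nb E v) (subE E v) (k + 3) e'' u w))"
      by (rule spec[OF spec[OF IH, of "nb E v"], of "subE E v"])
    have noS: "\<not> (\<exists>S' \<subseteq> nb E v. card S' = k + 3 + 1 \<and> (\<forall>u\<in>S'. \<forall>w\<in>S'. u \<noteq> w \<longrightarrow> eps_disjoint (nb E v) (subE E v) (k + 3) e'' u w))"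
      using IHv sg' kf' deg' by (simp only: simp_thms)
    have "k + 4 \<le> card {s\<in>S. E v s}" using v by (simp add: T_def)
    then obtain S' where S': "S' \<subseteq> {s\<in>S. E v s}" "card S' = k + 4"
      by (meson obtain_subset_with_card_n)
    have S'nb: "S' \<subseteq> nb E v" using S'(1) by (auto simp: nb_def)
    have cS': "card S' = k + 3 + 1" using S'(2) by simp
    have "\<not> (\<forall>u\<in>S'. \<forall>w\<in>S'. u \<noteq> w \<longrightarrow> eps_disjoint (nb E v) (subE E v) (k + 3) e'' u w)"
    proof
      assume A: "\<forall>u\<in>S'. \<forall>w\<in>S'. u \<noteq> w \<longrightarrow> eps_disjoint (nb E v) (subE E v) (k + 3) e'' u w"
      have "\<exists>S' \<subseteq> nb E v. card S' = k + 3 + 1 \<and> (\<forall>u\<in>S'. \<forall>w\<in>S'. u \<noteq> w \<longrightarrow> eps_disjoint (nb E v) (subE E v) (k + 3) e'' u w)"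
        by (rule exI[of _ S']) (use S'nb cS' A in simp)
      then show False using noS by simp
    qed
    then obtain u w where uw: "u \<in> S'" "w \<in> S'" "u \<noteq> w" "\<not> eps_disjoint (nb E v) (subE E v) (k + 3) e'' u w"
      by blast
    have big: "real (card (F_uv (nb E v) (subE E v) (k + 3) u w)) > e'' * real (card (Cl V E (k + 1) (nb E v)))"
      using uw(4) sub_cliques[OF g, of v "k+1"] by (simp add: eps_disjoint_def e32)
    have uS: "u \<in> S" and wS: "w \<in> S - {u}" using uw S'(1) by auto
    have "real (card (F_uv (nb E v) (subE E v) (k + 3) u w)) \<le> (\<Sum>s'\<in>S-{u}. real (card (F_uv (nb E v) (subE E v) (k + 3) u s')))"
      by (rule member_le_sum[OF wS]) (use fS in auto)
    also have "\<dots> \<le> Fs v" unfolding Fs_def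
      by (rule member_le_sum[OF uS, where f = "\<lambda>s. \<Sum>s'\<in>S-{s}. real (card (F_uv (nb E v) (subE E v) (k + 3) s s'))"])
         (use fS in \<open>auto intro: sum_nonneg\<close>)
    finally show ?thesis using big by linarith
  qed
  have claim2: "real (card (Cl V E (k + 1) (nb E v))) \<ge> c * n ^ (k + 1)" if v: "v \<in> T" for v
  proof -
    have vV: "v \<in> V" using v TV by blast
    define b where "b = n - x * n"
    define m where "m = (real k + 1) * x * n - real k * n"
    have hb: "\<forall>u\<in>V. real (card (V - nb E u)) \<le> b" using hb_lemma[OF g degx] by (simp add: b_def n_def)
    have b0: "b \<ge> 0" using x1 npos by (simp add: b_def algebra_simps mult_le_cancel_right1)
    have mge: "m \<ge> 4 / (3 * real k + 7) * n"
    proof -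
      have "m = ((real k + 1) * alpha (k + 4) - real k) * n + (real k + 1) * \<epsilon> * n"
        by (simp add: m_def x_def algebra_simps)
      also have "\<dots> = 4 / (3 * real k + 7) * n + (real k + 1) * \<epsilon> * n" by (simp add: alpha_clique)
      finally show ?thesis using e npos by simp
    qed
    have "4 / (3 * real k + 7) * n \<ge> 0" using npos by simp
    then have m0: "m \<ge> 0" using mge by linarith
    have "x * real (card V) \<le> real (degree V E v)" using degx vV by blast
    then have "real (card (nb E v)) \<ge> x * n" using degree_nb[OF g, of v] by (simp add: n_def)
    then have cn: "real (card (nb E v)) \<ge> real k * b + m" by (simp add: b_def m_def algebra_simps)
    have A: "real (card (Cl V E (Suc k) (nb E v))) \<ge> m ^ Suc k / fact (Suc k)"
      by (rule clique_lb[OF g hb b0 nb_sub[OF g] m0 cn])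
    have B: "m ^ Suc k / fact (Suc k) \<ge> (4 / (3 * real k + 7) * n) ^ Suc k / fact (Suc k)"
      by (rule divide_right_mono[OF power_mono[OF mge]]) (use npos in simp_all)
    have C: "(4 / (3 * real k + 7) * n) ^ Suc k / fact (Suc k) = c * n ^ (k + 1)"
      unfolding c_def power_mult_distrib Suc_eq_plus1 by (simp only: times_divide_eq_left)
    have "real (card (Cl V E (Suc k) (nb E v))) \<ge> c * n ^ (k + 1)" using A B C by linarith
    then show ?thesis by simp
  qed
  have "(\<Sum>v\<in>T. e'' * (c * n ^ (k + 1))) < (\<Sum>v\<in>T. Fs v)"
  proof (rule sum_strict_mono[OF fT Tne])
    fix v assume v: "v \<in> T"
    have "e'' * (c * n ^ (k + 1)) \<le> e'' * real (card (Cl V E (k + 1) (nb E v)))"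
      using claim2[OF v] e''0 by (simp add: mult_left_mono)
    then show "e'' * (c * n ^ (k + 1)) < Fs v" using claim1[OF v] by linarith
  qed
  also have "(\<Sum>v\<in>T. Fs v) \<le> (\<Sum>v\<in>V. Fs v)"
    by (rule sum_mono2[OF fV TV]) (auto simp: Fs_def intro!: sum_nonneg)
  also have "(\<Sum>v\<in>V. Fs v) = (\<Sum>s\<in>S. \<Sum>s'\<in>S-{s}. \<Sum>v\<in>V. real (card (F_uv (nb E v) (subE E v) (k + 3) s s')))"
    unfolding Fs_def by (rule triple_swap)
  also have "\<dots> \<le> real (card S) * (real (card S) - 1) * (real (k + 2) * (e' * n ^ (k + 2)))"
  proof (rule pairs_sum_le[OF fS])
    fix s s' assume ss: "s \<in> S" "s' \<in> S" "s \<noteq> s'"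
    have e1: "k + 1 + 2 = k + 3" "k + 1 + 3 = k + 4" "k + 1 + 1 = k + 2" by simp_all
    have "(\<Sum>v\<in>V. card (F_uv (nb E v) (subE E v) (k + 3) s s')) \<le> (k + 2) * card (F_uv V E (k + 4) s s')"
      using F_double_count[OF g, of "k+1" s s'] unfolding e1 .
    then have "real (\<Sum>v\<in>V. card (F_uv (nb E v) (subE E v) (k + 3) s s')) \<le> real ((k + 2) * card (F_uv V E (k + 4) s s'))"
      by (simp only: of_nat_le_iff)
    then have "(\<Sum>v\<in>V. real (card (F_uv (nb E v) (subE E v) (k + 3) s s'))) \<le> real (k + 2) * real (card (F_uv V E (k + 4) s s'))"
      by (simp only: of_nat_sum of_nat_mult)
    also have "real (card (F_uv V E (k + 4) s s')) \<le> e' * real (card (cliques V E (k + 2)))"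
      using dis ss by (simp add: eps_disjoint_def e32)
    also have "\<dots> \<le> e' * n ^ (k + 2)" using cliques_card_le_real[OF g, of "k+2"] e'0
      by (intro mult_left_mono) (simp_all add: n_def)
    finally show "(\<Sum>v\<in>V. real (card (F_uv (nb E v) (subE E v) (k + 3) s s'))) \<le> real (k + 2) * (e' * n ^ (k + 2))"
      by (simp add: mult_left_mono)
  qed
  finally have ineq0: "(\<Sum>v\<in>T. e'' * (c * n ^ (k + 1))) < real (card S) * (real (card S) - 1) * (real (k + 2) * (e' * n ^ (k + 2)))" .
  have "real (card S) - 1 = real (k + 4)" using cS by simp
  then have ineq: "(\<Sum>v\<in>T. e'' * (c * n ^ (k + 1))) < real (k + 5) * real (k + 4) * (real (k + 2) * (e' * n ^ (k + 2)))"
    using ineq0 cS by (simp only:)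
  have "(\<Sum>v\<in>T. e'' * (c * n ^ (k + 1))) = real (card T) * (e'' * (c * n ^ (k + 1)))" by simp
  also have "\<dots> \<ge> \<epsilon> * n * (e'' * (c * n ^ (k + 1)))"
    using Tn e''0 cpos npos by (intro mult_right_mono) auto
  finally have "\<epsilon> * n * (e'' * (c * n ^ (k + 1))) < real (k + 5) * real (k + 4) * (real (k + 2) * (e' * n ^ (k + 2)))"
    using ineq by linarith
  then have "(e'' * \<epsilon> * c) * n ^ (k + 2) < (e' * (real (k + 5) * real (k + 4) * real (k + 2))) * n ^ (k + 2)"
    by (simp add: algebra_simps)
  then have "e'' * \<epsilon> * c < e' * (real (k + 5) * real (k + 4) * real (k + 2))"
    using npos by (simp add: mult_less_cancel_right)
  then show False using small by (simp add: c_def)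
qed

lemma step: "Claim (k + 3) \<Longrightarrow> Claim (k + 4)"
proof -
  assume IHc: "Claim (k + 3)"
  show "Claim (k + 4)"
    unfolding Claim_def
  proof (intro allI impI)
    fix \<epsilon> :: real assume e: "\<epsilon> > 0"
    have e2: "\<epsilon> / 2 > 0" using e by simp
    have exs: "\<exists>\<epsilon>'>0. \<forall>(V' :: nat set) (E' :: nat \<Rightarrow> nat \<Rightarrow> bool). simple_graph V' E' \<longrightarrow> Kt_free V' E' (k + 3) \<longrightarrow>
      (\<forall>u\<in>V'. real (degree V' E' u) \<ge> (alpha (k + 3) + \<epsilon> / 2) * real (card V')) \<longrightarrow>
      \<not> (\<exists>S' \<subseteq> V'. card S' = k + 3 + 1 \<and> (\<forall>u\<in>S'. \<forall>v\<in>S'. u \<noteq> v \<longrightarrow> eps_disjoint V' E' (k + 3) \<epsilon>' u v))"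
      using mp[OF spec[OF IHc[unfolded Claim_def], of "\<epsilon>/2"] e2] .
    obtain e'' where e''0: "e'' > 0" and IH: "\<forall>(V' :: nat set) (E' :: nat \<Rightarrow> nat \<Rightarrow> bool). simple_graph V' E' \<longrightarrow> Kt_free V' E' (k + 3) \<longrightarrow>
      (\<forall>u\<in>V'. real (degree V' E' u) \<ge> (alpha (k + 3) + \<epsilon> / 2) * real (card V')) \<longrightarrow>
      \<not> (\<exists>S' \<subseteq> V'. card S' = k + 3 + 1 \<and> (\<forall>u\<in>S'. \<forall>v\<in>S'. u \<noteq> v \<longrightarrow> eps_disjoint V' E' (k + 3) e'' u v))"
      using exs by (elim exE conjE) (rule that)
    define c where "c = (4 / (3 * real k + 7)) ^ (k + 1) / fact (k + 1)"
    have cpos: "c > 0" by (simp add: c_def)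
    define K where "K = real (k + 5) * real (k + 4) * real (k + 2)"
    have Kpos: "K > 0" by (simp add: K_def)
    define e1 where "e1 = e'' * \<epsilon> * c / (2 * K)"
    have e1pos: "e1 > 0" using e''0 e cpos Kpos by (simp add: e1_def)
    define e' where "e' = min e1 (\<epsilon> ^ 3 / 4)"
    have e'pos: "e' > 0" using e1pos e by (simp add: e'_def)
    have small: "e' * (real (k + 5) * real (k + 4) * real (k + 2)) < e'' * \<epsilon> * ((4 / (3 * real k + 7)) ^ (k + 1) / fact (k + 1))"
    proof -
      have "e' * K \<le> e1 * K" using Kpos by (simp add: e'_def)
      also have "e1 * K = e'' * \<epsilon> * c / 2" using Kpos by (simp add: e1_def)
      also have "\<dots> < e'' * \<epsilon> * c" using e''0 e cpos by simp
      finally show ?thesis by (simp add: K_def c_def)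
    qed
    show "\<exists>\<epsilon>'>0. \<forall>V E. simple_graph V E \<longrightarrow> Kt_free V E (k + 4) \<longrightarrow>
      (\<forall>u\<in>V. real (degree V E u) \<ge> (alpha (k + 4) + \<epsilon>) * real (card V)) \<longrightarrow>
      \<not> (\<exists>S \<subseteq> V. card S = k + 4 + 1 \<and> (\<forall>u\<in>S. \<forall>v\<in>S. u \<noteq> v \<longrightarrow> eps_disjoint V E (k + 4) \<epsilon>' u v))"
    proof (intro exI[of _ e'] conjI allI impI notI)
      show "e' > 0" by (rule e'pos)
      fix V E assume g: "simple_graph V E" and kf: "Kt_free V E (k + 4)"
        and deg: "\<forall>u\<in>V. real (degree V E u) \<ge> (alpha (k + 4) + \<epsilon>) * real (card V)"
        and ex: "\<exists>S \<subseteq> V. card S = k + 4 + 1 \<and> (\<forall>u\<in>S. \<forall>v\<in>S. u \<noteq> v \<longrightarrow> eps_disjoint V E (k + 4) e' u v)"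
      obtain S where S: "S \<subseteq> V" and cS0: "card S = k + 4 + 1"
        and dis: "\<forall>u\<in>S. \<forall>v\<in>S. u \<noteq> v \<longrightarrow> eps_disjoint V E (k + 4) e' u v"
        using ex by blast
      have cS: "card S = k + 5" using cS0 by simp
      have Tl: "real (card {w\<in>V. k + 4 \<le> card {s\<in>S. E w s}}) \<ge> \<epsilon> * real (card V)"
      proof (cases "k = 0")
        case True
        have kf4: "Kt_free V E 4" using kf True by simp
        have cS5: "card S = 5" using cS True by simp
        have deg4: "\<forall>u\<in>V. real (degree V E u) \<ge> (alpha 4 + \<epsilon>) * real (card V)" using deg True by simp
        have dis4: "\<forall>s\<in>S. \<forall>s'\<in>S. s \<noteq> s' \<longrightarrow> real (card (F_uv V E 4 s s')) \<le> e' * real (card (cliques V E 2))"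
          using dis True by (simp add: eps_disjoint_def)
        have "e' \<le> \<epsilon> ^ 3 / 4" by (simp add: e'_def)
        from T_large_k0[OF g kf4 S cS5 e deg4 dis4 this] e'pos
        show ?thesis using True by simp
      next
        case False
        then have "k \<ge> 1" by simp
        from T_large_k1[OF g S cS this e deg] show ?thesis .
      qed
      show False
        by (rule stepB[OF g kf S cS e deg Tl IH dis _ e''0 small]) (use e'pos in simp)
    qed
  qed
qed

lemma claim_all: "t \<ge> 3 \<Longrightarrow> Claim t"
proof -
  assume t: "t \<ge> 3"
  have "Claim (k + 3)" for k
  proof (induction k)
    case 0
    then show ?case using base3 by simp
  next
    case (Suc k)
    then show ?case using step[of k] by (simp add: add.commute)
  qed
  from this[of "t - 3"] show ?thesis using t by simp
qed


theorem lemma6p9: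
  fixes t :: nat and \<epsilon> :: real
  assumes "t \<ge> 3" and "\<epsilon> > 0"
  shows "\<exists>\<epsilon>'>0. \<forall>(V :: nat set) (E :: nat \<Rightarrow> nat \<Rightarrow> bool) (n :: nat) (d :: nat).
           simple_graph V E \<longrightarrow> card V = n \<longrightarrow> Kt_free V E t \<longrightarrow> regular V E d \<longrightarrow>
           real d \<ge> ((3 * real t - 8) / (3 * real t - 5) + \<epsilon>) * real n \<longrightarrow>
           \<not> (\<exists>S \<subseteq> V. card S = t + 1 \<and>
                (\<forall>u\<in>S. \<forall>v\<in>S. u \<noteq> v \<longrightarrow> eps_disjoint V E t \<epsilon>' u v))"
proof -
  have C: "Claim t" using claim_all assms(1) by blast
  obtain e' where e'0: "e' > 0" and P: "\<forall>(V :: nat set) (E :: nat \<Rightarrow> nat \<Rightarrow> bool).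
      simple_graph V E \<longrightarrow> Kt_free V E t \<longrightarrow>
      (\<forall>u\<in>V. real (degree V E u) \<ge> (alpha t + \<epsilon>) * real (card V)) \<longrightarrow>
      \<not> (\<exists>S \<subseteq> V. card S = t + 1 \<and> (\<forall>u\<in>S. \<forall>v\<in>S. u \<noteq> v \<longrightarrow> eps_disjoint V E t e' u v))"
    using mp[OF spec[OF C[unfolded Claim_def], of \<epsilon>] assms(2)] by (elim exE conjE) (rule that)
  show ?thesis
  proof (intro exI[of _ e'] conjI allI impI)
    show "e' > 0" by (rule e'0)
    fix V :: "nat set" and E :: "nat \<Rightarrow> nat \<Rightarrow> bool" and n d :: nat
    assume g: "simple_graph V E" and cV: "card V = n" and kf: "Kt_free V E t" and r: "regular V E d"
      and dd: "real d \<ge> ((3 * real t - 8) / (3 * real t - 5) + \<epsilon>) * real n"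
    have deg: "\<forall>u\<in>V. real (degree V E u) \<ge> (alpha t + \<epsilon>) * real (card V)"
      using r dd cV by (simp add: regular_def alpha_def)
    show "\<not> (\<exists>S \<subseteq> V. card S = t + 1 \<and> (\<forall>u\<in>S. \<forall>v\<in>S. u \<noteq> v \<longrightarrow> eps_disjoint V E t e' u v))"
      using P g kf deg by blast
  qed
qed

end
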